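(* Let $\rho>0$, $x>0$, $\alpha,\beta\in\{\pm1\}$, and $\eta\in\mathbb{R}$ with $\alpha\eta\not\equiv-\pi$ and $\alpha\eta\not\equiv 0 \pmod{2\pi\rho}$. Let $\mathcal{P}_\rho(\alpha\eta)=\{\frac{\pi}{2}+\alpha\eta+2\pi\rho k : k\in\mathbb{Z}\}\cap[-\pi,\pi)$, for $\varphi\in\mathcal{P}_\rho(\alpha\eta)$ let $\sigma_\varphi=\operatorname{sgn}(\cos\varphi)$, and let $a^{(\alpha,\beta)}_\varphi=-\frac{\beta\rho\,e^{x\beta i}}{2\pi i}$. Then $$\sum_{\varphi \in \mathcal{P}_\rho(\alpha\eta)} a_\varphi^{(\alpha,\beta)} \int_{-\infty}^\infty \frac{e^{-x s^2}}{s - \sigma_\varphi \left( \beta i - i \sin\varphi \right)^{1/2}} \, ds = - \frac{\rho}{2} \sum_{\varphi \in \mathcal{P}_\rho(\alpha\eta)} \sigma_\varphi \exp\!\left[ i x \sin\varphi \right] \operatorname{erfc}\!\left[ e^{-\beta \frac{\pi}{4}i} \, x^{1/2} \left(1 - \beta \sin\varphi \right)^{1/2} \right].$$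
   Context: Square roots are principal branches. $\operatorname{erfc}(z)=\frac{2}{\sqrt{\pi}}\int_z^\infty e^{-u^2}\,du$ is the complementary error function. (The numbers $a^{(\alpha,\beta)}_\varphi$ are the residues at its poles $s=\sigma_\varphi(\beta i-i\sin\varphi)^{1/2}$ of the function $A_{\alpha,\beta}(s)=\frac{\beta e^{x\beta i}}{2\pi}\cot\!\big[\frac{\frac{\pi}{2}+\alpha\eta+i\log[\beta i-s^2+s(s^2-2\beta i)^{1/2}]}{2\rho}\big](s^2-2\beta i)^{-1/2}$.) *)

theory Defs
  imports "HOL-Analysis.Analysis"
begin

definition cerfc :: "complex \<Rightarrow> complex" where
  "cerfc z = complex_of_real (2 / sqrt pi) * integral {0..} (\<lambda>t::real. exp (- ((z + complex_of_real t)^2)))"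

definition Pset :: "real \<Rightarrow> real \<Rightarrow> real set" where
  "Pset \<rho> c = {\<phi>. (\<exists>k::int. \<phi> = pi/2 + c + 2*pi*\<rho> * of_int k) \<and> -pi \<le> \<phi> \<and> \<phi> < pi}"

end

theory Submission imports Defs "HOL-Probability.Characteristic_Functions" begin


lemma gauss_char:
  fixes t :: real
  shows "has_bochner_integral lborel (\<lambda>y. complex_of_real (exp (-(y^2)/2)) * exp (\<i> * complex_of_real (t*y)))
           (complex_of_real (sqrt (2*pi) * exp (-(t^2)/2)))"
proof -
  have m: "(\<lambda>x. iexp (t * x)) \<in> borel_measurable lborel" by measurable
  have c: "(CLINT x | std_normal_distribution. iexp (t * x)) = complex_of_real (exp (- (t^2) / 2))"
    using char_std_normal_distribution[THEN fun_cong, of t] unfolding char_def by simp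
  have c2: "(CLINT x | lborel. std_normal_density x *\<^sub>R iexp (t * x)) = complex_of_real (exp (- (t^2) / 2))"
    using c by (subst (asm) integral_density) (auto simp: m)
  have int: "integrable lborel (\<lambda>x. std_normal_density x *\<^sub>R iexp (t * x))"
    by (rule Bochner_Integration.integrable_bound[OF integrable_normal_density[where \<mu>=0 and \<sigma>=1]]) (auto simp: m norm_exp_i_times)
  have eq: "(\<lambda>y. complex_of_real (exp (-(y^2)/2)) * exp (\<i> * complex_of_real (t*y)))
      = (\<lambda>y. complex_of_real (sqrt (2*pi)) * (std_normal_density y *\<^sub>R iexp (t * y)))"
    by (auto simp: std_normal_density_def scaleR_conv_of_real)
  show ?thesis unfolding eq
    using has_bochner_integral_mult_right[OF has_bochner_integral_integrable[OF int], of "complex_of_real (sqrt (2*pi))"] c2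
    by simp
qed



lemma integrable_exp_halfline:
  fixes a :: real assumes "a < 0"
  shows "integrable lborel (\<lambda>u. indicator {0..} u * exp (a * u))"
proof -
  have "(\<integral>\<^sup>+x. ennreal (exp (a * x)) * indicator {0 ..} x \<partial>lborel) = 0 - exp (a * 0) / a"
  proof (rule nn_integral_FTC_atLeast)
    show "\<And>x. 0 \<le> x \<Longrightarrow> ((\<lambda>x. exp (a * x) / a) has_real_derivative exp (a * x)) (at x)"
      using assms by (auto intro!: derivative_eq_intros)
    have "LIM x at_top. a * x :> at_bot"
      by (rule filterlim_tendsto_neg_mult_at_bot[OF tendsto_const assms filterlim_ident])
    then have "((\<lambda>x. exp (a * x)) \<longlongrightarrow> 0) at_top"
      by (rule filterlim_compose[OF exp_at_bot])
    then show "((\<lambda>x. exp (a * x) / a) \<longlongrightarrow> 0) at_top"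
      using tendsto_divide[OF _ tendsto_const, of _ 0 _ a] assms by simp
  qed auto
  then have "(\<integral>\<^sup>+x. ennreal (indicator {0..} x * exp (a * x)) \<partial>lborel) = ennreal (- 1 / a)"
    by (simp add: mult.commute indicator_mult_ennreal)
  then show ?thesis
    by (intro integrableI_nn_integral_finite[where x="-1/a"]) auto
qed

lemma exp_halfline:
  fixes c :: complex assumes c: "Re c < 0"
  shows "has_bochner_integral lborel (\<lambda>u. indicator {0..} u *\<^sub>R exp (c * of_real u)) (- 1 / c)"
proof -
  define s where "s = (\<lambda>(n::nat) (u::real). indicator {0..real n} u *\<^sub>R exp (c * of_real u))"
  define f where "f = (\<lambda>u::real. indicator {0..} u *\<^sub>R exp (c * of_real u))"
  define w where "w = (\<lambda>u::real. indicator {0..} u * exp (Re c * u))"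
  have fm: "f \<in> borel_measurable lborel" unfolding f_def by measurable
  have sm: "\<And>n. s n \<in> borel_measurable lborel" unfolding s_def by measurable
  have wi: "integrable lborel w" unfolding w_def by (rule integrable_exp_halfline[OF c])
  have lim: "AE x in lborel. (\<lambda>i. s i x) \<longlonglongrightarrow> f x"
  proof (rule AE_I2)
    fix x :: real
    obtain N :: nat where "x \<le> real N" using real_arch_simple by blast
    then have "\<forall>n\<ge>N. s n x = f x"
      unfolding s_def f_def by (auto simp: indicator_def)
    then show "(\<lambda>i. s i x) \<longlonglongrightarrow> f x"
      by (intro tendsto_eventually) (auto simp: eventually_sequentially)
  qed
  have bound: "\<And>i. AE x in lborel. norm (s i x) \<le> w x"
    unfolding s_def w_def by (auto simp: indicator_def norm_exp_eq_Re)
  have fi: "integrable lborel f"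
    by (rule integrable_dominated_convergence[OF fm sm wi lim bound])
  have L: "(\<lambda>i. integral\<^sup>L lborel (s i)) \<longlonglongrightarrow> integral\<^sup>L lborel f"
    by (rule integral_dominated_convergence[OF fm sm wi lim bound])
  have cn: "c \<noteq> 0" using c by auto
  have si: "integral\<^sup>L lborel (s n) = exp (c * of_real (real n)) / c - exp (c * of_real (0::real)) / c" for n
    unfolding s_def
  proof (rule integral_FTC_Icc)
    show "0 \<le> real n" by simp
    show "continuous_on {0..real n} (\<lambda>u. exp (c * complex_of_real u))"
      by (intro continuous_intros)
    fix x :: real
    show "((\<lambda>u. exp (c * complex_of_real u) / c) has_vector_derivative exp (c * complex_of_real x)) (at x within {0..real n})"
    proof (rule has_vector_derivative_real_field[where f="\<lambda>z. exp (c * z) / c"])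
      show "((\<lambda>z. exp (c * z) / c) has_field_derivative exp (c * complex_of_real x)) (at (complex_of_real x))"
        using cn by (auto intro!: derivative_eq_intros)
    qed
  qed
  have "(\<lambda>n. exp (c * of_real (real n))) \<longlonglongrightarrow> 0"
  proof (rule tendsto_norm_zero_cancel)
    have "LIM n sequentially. Re c * real n :> at_bot"
      by (rule filterlim_tendsto_neg_mult_at_bot[OF tendsto_const c filterlim_real_sequentially])
    then have "(\<lambda>n. exp (Re c * real n)) \<longlonglongrightarrow> 0"
      by (rule filterlim_compose[OF exp_at_bot])
    then show "(\<lambda>n. norm (exp (c * of_real (real n)))) \<longlonglongrightarrow> 0"
      by (simp add: norm_exp_eq_Re)
  qed
  then have "(\<lambda>n. exp (c * of_real (real n)) / c - exp (c * of_real (0::real)) / c) \<longlonglongrightarrow> 0 / c - exp (c * of_real (0::real)) / c"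
    using cn by (intro tendsto_intros)
  then have "(\<lambda>i. integral\<^sup>L lborel (s i)) \<longlonglongrightarrow> - 1 / c"
    unfolding si by simp
  with L have "integral\<^sup>L lborel f = - 1 / c" by (rule LIMSEQ_unique)
  with fi show ?thesis unfolding f_def by (simp add: has_bochner_integral_iff)
qed


lemma gauss_integrable: "integrable lborel (\<lambda>y::real. exp (-(y^2)/2))"
proof -
  have "integrable lborel (\<lambda>y. sqrt (2*pi) * std_normal_density y)"
    by (intro integrable_mult_right integrable_normal_density) simp
  then show ?thesis by (simp add: std_normal_density_def)
qed

lemma core:
  fixes w :: complex and e :: real
  assumes e: "e = 1 \<or> e = -1" and pos: "e * Im w > 0"
  shows "has_bochner_integral lborel (\<lambda>y. complex_of_real (exp (-(y^2)/2)) / (complex_of_real y - w))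
     (\<i> * of_real e * of_real (sqrt (2*pi)) * (\<integral>u. indicator {0..} u *\<^sub>R (exp (\<i> * of_real e * w * of_real u) * of_real (exp (-(u^2)/2))) \<partial>lborel))"
proof -
  define b where "b = e * Im w"
  have b: "b > 0" using pos b_def by simp
  have e2: "e * e = 1" using e by auto
  define cy where "cy = (\<lambda>y::real. - (\<i> * of_real e) * (complex_of_real y - w))"
  define K where "K = (\<lambda>(y::real) (u::real). complex_of_real (exp (-(y^2)/2)) * (indicator {0..} u *\<^sub>R exp (cy y * of_real u)))"
  define G where "G = (\<lambda>y::real. complex_of_real (exp (-(y^2)/2)) / (complex_of_real y - w))"
  have Recy: "Re (cy y) = - b" for y
    unfolding cy_def b_def by simp
  have ne: "complex_of_real y - w \<noteq> 0" for y
  proof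
    assume "complex_of_real y - w = 0"
    then have "Im w = 0" by (metis Im_complex_of_real right_minus_eq)
    with pos show False by simp
  qed
  have ie: "\<i> * complex_of_real e \<noteq> 0" using e by auto
  have inner: "has_bochner_integral lborel (K y) (G y / (\<i> * of_real e))" for y
  proof -
    have h: "has_bochner_integral lborel (\<lambda>u. indicator {0..} u *\<^sub>R exp (cy y * of_real u)) (- 1 / cy y)"
      by (rule exp_halfline) (simp add: Recy b)
    have "G y / (\<i> * of_real e) = complex_of_real (exp (-(y^2)/2)) * (- 1 / cy y)"
      unfolding G_def cy_def using ne[of y] ie by (simp add: field_simps)
    then show ?thesis unfolding K_def
      using has_bochner_integral_mult_right[OF h, of "complex_of_real (exp (-(y^2)/2))"] by simp
  qed
  have normK: "norm (K y u) = exp (-(y^2)/2) * (indicator {0..} u * exp (- b * u))" for y u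
    unfolding K_def by (simp add: norm_mult norm_exp_eq_Re Recy indicator_def)
  have Km: "(\<lambda>(y, u). K y u) \<in> borel_measurable (lborel \<Otimes>\<^sub>M lborel)"
    unfolding K_def cy_def by measurable
  have int2: "integrable (lborel \<Otimes>\<^sub>M lborel) (\<lambda>(y, u). K y u)"
  proof (rule lborel_pair.Fubini_integrable)
    show "(\<lambda>(y, u). K y u) \<in> borel_measurable (lborel \<Otimes>\<^sub>M lborel)" by (rule Km)
    have "(\<lambda>y. \<integral>u. norm (case (y, u) of (y, u) \<Rightarrow> K y u) \<partial>lborel)
        = (\<lambda>y. exp (-(y^2)/2) * (\<integral>u. indicator {0..} u * exp (- b * u) \<partial>lborel))"
      by (simp add: normK)
    moreover have "integrable lborel (\<lambda>y. exp (-(y^2)/2) * (\<integral>u. indicator {0..} u * exp (- b * u) \<partial>lborel))"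
      by (intro integrable_mult_left gauss_integrable)
    ultimately show "integrable lborel (\<lambda>y. \<integral>u. norm (case (y, u) of (y, u) \<Rightarrow> K y u) \<partial>lborel)"
      by simp
    show "AE y in lborel. integrable lborel (\<lambda>u. case (y, u) of (y, u) \<Rightarrow> K y u)"
      using inner by (auto simp: has_bochner_integral_iff)
  qed
  have fub: "(\<integral>u. (\<integral>y. K y u \<partial>lborel) \<partial>lborel) = (\<integral>y. (\<integral>u. K y u \<partial>lborel) \<partial>lborel)"
    by (rule lborel_pair.Fubini_integral[OF int2])
  have intfst: "integrable lborel (\<lambda>y. \<integral>u. K y u \<partial>lborel)"
    by (rule lborel_pair.integrable_fst[OF int2])
  have eqfst: "(\<lambda>y. \<integral>u. K y u \<partial>lborel) = (\<lambda>y. G y / (\<i> * of_real e))"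
    using inner by (auto simp: has_bochner_integral_iff)
  have Gi: "integrable lborel G"
  proof -
    have "integrable lborel (\<lambda>y. (\<i> * of_real e) * (G y / (\<i> * of_real e)))"
      using intfst unfolding eqfst by (rule integrable_mult_right)
    then show ?thesis using ie by simp
  qed
  have snd: "(\<integral>y. K y u \<partial>lborel) = of_real (sqrt (2*pi)) * (indicator {0..} u *\<^sub>R (exp (\<i> * of_real e * w * of_real u) * of_real (exp (-(u^2)/2))))" for u
  proof -
    have gc: "has_bochner_integral lborel (\<lambda>y. complex_of_real (exp (-(y^2)/2)) * exp (\<i> * complex_of_real ((- e * u)*y)))
           (complex_of_real (sqrt (2*pi) * exp (-((- e * u)^2)/2)))"
      by (rule gauss_char)
    have sq: "(- e * u)^2 = u^2" using e by (auto simp: power2_eq_square)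
    have "K y u = (indicator {0..} u *\<^sub>R exp (\<i> * of_real e * w * of_real u)) * (complex_of_real (exp (-(y^2)/2)) * exp (\<i> * complex_of_real ((- e * u)*y)))" for y
      unfolding K_def cy_def by (simp add: indicator_def algebra_simps exp_add[symmetric])
    then have "(\<integral>y. K y u \<partial>lborel) = (indicator {0..} u *\<^sub>R exp (\<i> * of_real e * w * of_real u)) * complex_of_real (sqrt (2*pi) * exp (-(u^2)/2))"
      using has_bochner_integral_mult_right[OF gc, of "indicator {0..} u *\<^sub>R exp (\<i> * of_real e * w * of_real u)"] sq
      by (simp add: has_bochner_integral_iff)
    then show ?thesis by (simp add: indicator_def)
  qed
  have "(\<integral>y. G y \<partial>lborel) = (\<i> * of_real e) * (\<integral>y. G y / (\<i> * of_real e) \<partial>lborel)"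
    using ie by simp
  also have "\<dots> = (\<i> * of_real e) * (\<integral>u. (\<integral>y. K y u \<partial>lborel) \<partial>lborel)"
    unfolding fub eqfst ..
  also have "\<dots> = \<i> * of_real e * of_real (sqrt (2*pi)) * (\<integral>u. indicator {0..} u *\<^sub>R (exp (\<i> * of_real e * w * of_real u) * of_real (exp (-(u^2)/2))) \<partial>lborel)"
    unfolding snd integral_mult_right_zero by (simp only: mult.assoc)
  finally show ?thesis using Gi unfolding G_def by (simp add: has_bochner_integral_iff)
qed



lemma alg:
  fixes \<beta> e \<sigma> \<rho> p :: real and Eb X Y H :: complex
  assumes "\<beta> * e = \<sigma>" "Eb * X = Y" "p > 0"
  shows "-(of_real (\<beta> * \<rho>) * Eb / (2 * of_real p * \<i>)) * (\<i> * of_real e * of_real (sqrt (2*p)) * (of_real (sqrt 2) * X * H))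
       = - of_real (\<rho>/2) * (of_real \<sigma> * Y * (of_real (2 / sqrt p) * H))"
proof -
  have s1: "sqrt (2*p) * sqrt 2 = 2 * sqrt p"
  proof -
    have "sqrt (2 * p) * sqrt 2 = sqrt (2^2 * p)" by (simp add: real_sqrt_mult[symmetric] algebra_simps)
    also have "\<dots> = 2 * sqrt p" by (simp add: real_sqrt_mult)
    finally show ?thesis .
  qed
  have s2: "sqrt p * sqrt p = p" using assms(3) by simp
  define K where "K = (\<beta> * \<rho> * e * (sqrt (2*p) * sqrt 2)) / (2 * p)"
  have K: "K = \<rho> * \<sigma> / sqrt p"
    unfolding K_def s1 using assms(1,3) s2
    by (simp add: field_simps)
  have "-(of_real (\<beta> * \<rho>) * Eb / (2 * of_real p * \<i>)) * (\<i> * of_real e * of_real (sqrt (2*p)) * (of_real (sqrt 2) * X * H))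
      = - of_real K * (Eb * X) * H"
    unfolding K_def using assms(3) by (simp add: field_simps)
  also have "\<dots> = - of_real (\<rho>/2) * (of_real \<sigma> * Y * (of_real (2 / sqrt p) * H))"
    unfolding K assms(2) by (simp add: field_simps)
  finally show ?thesis .
qed

lemma term_eq:
  fixes \<rho> x \<beta> \<phi> :: real
  assumes x: "x > 0" and \<beta>: "\<beta> = 1 \<or> \<beta> = -1" and c\<phi>: "cos \<phi> \<noteq> 0"
  shows "(- (of_real (\<beta> * \<rho>) * exp (\<i> * of_real (x * \<beta>)) / (2 * of_real pi * \<i>)))
            * integral UNIV (\<lambda>s::real. exp (- of_real (x * s^2))
                 / (of_real s - of_real (sgn (cos \<phi>)) * csqrt (\<i> * of_real \<beta> - \<i> * of_real (sin \<phi>))))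
       = - of_real (\<rho> / 2) * (of_real (sgn (cos \<phi>)) * exp (\<i> * of_real (x * sin \<phi>))
            * cerfc (exp (- of_real \<beta> * of_real pi / 4 * \<i>) * of_real (sqrt x)
                     * csqrt (of_real (1 - \<beta> * sin \<phi>))))"
proof -
  define sn where "sn = sin \<phi>"
  define \<sigma> where "\<sigma> = sgn (cos \<phi>)"
  define m where "m = 1 - \<beta> * sn"
  define e where "e = \<sigma> * \<beta>"
  define a where "a = sqrt (2 * x)"
  define r where "r = sqrt m / sqrt 2"
  have \<sigma>: "\<sigma> = 1 \<or> \<sigma> = -1" using c\<phi> unfolding \<sigma>_def by (auto simp: sgn_real_def)
  have ee: "e = 1 \<or> e = -1" using \<sigma> \<beta> unfolding e_def by auto
  have \<beta>2: "\<beta> * \<beta> = 1" and \<sigma>2: "\<sigma> * \<sigma> = 1" and e2: "e * e = 1" using \<beta> \<sigma> ee by auto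
  have "sn^2 < 1"
  proof -
    have "sn^2 + (cos \<phi>)^2 = 1" unfolding sn_def by simp
    moreover have "(cos \<phi>)^2 > 0" using c\<phi> by simp
    ultimately show ?thesis by linarith
  qed
  then have snb: "\<bar>sn\<bar> < 1" by (simp add: abs_square_less_1)
  have m: "m > 0" using \<beta> snb unfolding m_def by auto
  have r: "r > 0" unfolding r_def using m by simp
  have r2: "r^2 = m / 2" unfolding r_def using m by (simp add: power_divide)
  have cs: "csqrt (\<i> * of_real \<beta> - \<i> * of_real sn) = of_real r * (1 + \<i> * of_real \<beta>)"
  proof (rule csqrt_unique)
    have A: "(1 + \<i> * complex_of_real \<beta>)^2 = 2 * \<i> * of_real \<beta>"
      using \<beta> by (auto simp: power2_eq_square algebra_simps)
    have B: "(of_real r * (1 + \<i> * of_real \<beta>))^2 = of_real (r^2) * (1 + \<i> * complex_of_real \<beta>)^2"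
      by (simp only: power_mult_distrib of_real_power)
    have C: "complex_of_real \<beta> * complex_of_real \<beta> = 1" using \<beta>2 by (metis of_real_1 of_real_mult)
    show "(of_real r * (1 + \<i> * of_real \<beta>))^2 = \<i> * of_real \<beta> - \<i> * of_real sn"
    proof -
      have D: "complex_of_real (m/2) * (2 * \<i> * of_real \<beta>) = \<i> * of_real \<beta> - \<i> * (of_real \<beta> * of_real \<beta>) * of_real sn"
        unfolding m_def by (simp add: field_simps)
      show ?thesis unfolding B A r2 D C by simp
    qed
    show "0 < Re (complex_of_real r * (1 + \<i> * complex_of_real \<beta>)) \<or>
      Re (complex_of_real r * (1 + \<i> * complex_of_real \<beta>)) = 0 \<and> 0 \<le> Im (complex_of_real r * (1 + \<i> * complex_of_real \<beta>))"
      using r by simp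
  qed
  define z where "z = of_real \<sigma> * csqrt (\<i> * of_real \<beta> - \<i> * of_real sn)"
  have z2: "z^2 = \<i> * of_real \<beta> - \<i> * of_real sn"
    unfolding z_def power_mult_distrib using \<sigma> by auto
  have Imz: "Im z = \<sigma> * r * \<beta>" unfolding z_def cs by simp
  have a: "a > 0" unfolding a_def using x by simp
  have a2: "a^2 = 2 * x" unfolding a_def using x by simp
  define w where "w = of_real a * z"
  have ew: "e * Im w > 0"
  proof -
    have "e * Im w = a * r * (\<sigma> * \<sigma>) * (\<beta> * \<beta>)" unfolding w_def e_def by (simp add: Imz algebra_simps)
    then show ?thesis using a r \<sigma>2 \<beta>2 by simp
  qed
  define L where "L = (\<integral>u. indicator {0..} u *\<^sub>R (exp (\<i> * of_real e * w * of_real u) * of_real (exp (-(u^2)/2))) \<partial>lborel)"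
  define G where "G = (\<lambda>y::real. complex_of_real (exp (-(y^2)/2)) / (complex_of_real y - w))"
  have core': "has_bochner_integral lborel G (\<i> * of_real e * of_real (sqrt (2*pi)) * L)"
    unfolding G_def L_def by (rule core[OF ee ew])
  define g where "g = (\<lambda>s::real. exp (- of_real (x * s^2)) / (of_real s - z))"
  have gG: "(\<lambda>y. g (0 + (1/a) * y)) = (\<lambda>y. of_real a * G y)"
  proof
    fix y :: real
    have 1: "x * (0 + (1/a) * y)^2 = y^2 / 2" using a a2 x by (simp add: power_mult_distrib power_divide field_simps)
    have 2: "complex_of_real (0 + (1/a) * y) - z = (complex_of_real y - w) / of_real a"
      unfolding w_def using a by (simp add: field_simps)
    show "g (0 + (1/a) * y) = of_real a * G y"
      unfolding g_def G_def 1 2 using a by (simp add: exp_of_real[symmetric] del: exp_of_real)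
  qed
  have gi: "integrable lborel g"
  proof -
    have "integrable lborel (\<lambda>y. of_real a * G y)"
      using core' by (auto simp: has_bochner_integral_iff)
    then have "integrable lborel (\<lambda>y. g (0 + (1/a) * y))" unfolding gG .
    then show ?thesis using lborel_integrable_real_affine_iff[of "1/a" g 0] a by simp
  qed
  have I1: "integral UNIV g = integral\<^sup>L lborel G"
  proof -
    have "integral UNIV g = integral\<^sup>L lborel g" by (rule integral_lborel[OF gi])
    also have "\<dots> = \<bar>1/a\<bar> *\<^sub>R (\<integral>y. g (0 + (1/a) * y) \<partial>lborel)"
      by (rule lborel_integral_real_affine) (use a in simp)
    also have "\<dots> = integral\<^sup>L lborel G"
      unfolding gG integral_mult_right_zero using a by (simp add: scaleR_conv_of_real)
    finally show ?thesis .
  qed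
  have I2: "integral\<^sup>L lborel G = \<i> * of_real e * of_real (sqrt (2*pi)) * L"
    using core' by (simp add: has_bochner_integral_iff)
  define q where "q = - \<i> * of_real e * of_real (sqrt x) * z"
  define H0 where "H0 = (\<integral>t. indicator {0..} t *\<^sub>R exp (-((q + of_real t)^2)) \<partial>lborel)"
  have L1: "L = of_real (sqrt 2) * exp (- of_real x * z^2) * H0"
  proof -
    have "L = \<bar>sqrt 2\<bar> *\<^sub>R (\<integral>t. indicator {0..} (0 + sqrt 2 * t) *\<^sub>R (exp (\<i> * of_real e * w * of_real (0 + sqrt 2 * t)) * of_real (exp (-((0 + sqrt 2 * t)^2)/2))) \<partial>lborel)"
      unfolding L_def by (rule lborel_integral_real_affine) simp
    also have "(\<lambda>t. indicator {0..} (0 + sqrt 2 * t) *\<^sub>R (exp (\<i> * of_real e * w * of_real (0 + sqrt 2 * t)) * of_real (exp (-((0 + sqrt 2 * t)^2)/2))))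
        = (\<lambda>t. exp (- of_real x * z^2) * (indicator {0..} t *\<^sub>R exp (-((q + of_real t)^2))))"
    proof
      fix t :: real
      have i: "indicator {0..} (0 + sqrt 2 * t) = (indicator {0..} t :: real)"
        by (simp add: indicator_def zero_le_mult_iff)
      have as0: "a * sqrt 2 = 2 * sqrt x"
      proof -
        have "sqrt (2 * x) * sqrt 2 = sqrt (2^2 * x)" by (simp add: real_sqrt_mult[symmetric] algebra_simps)
        also have "\<dots> = 2 * sqrt x" by (simp add: real_sqrt_mult)
        finally show ?thesis unfolding a_def .
      qed
      have as: "complex_of_real a * of_real (sqrt 2) = 2 * of_real (sqrt x)"
        by (metis as0 of_real_mult of_real_numeral)
      have sx: "(complex_of_real (sqrt x))^2 = of_real x"
        using x by (simp flip: of_real_power)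
      have ec: "(complex_of_real e)^2 = 1" using ee by auto
      have ex: "\<i> * of_real e * w * of_real (0 + sqrt 2 * t) + of_real (-((0 + sqrt 2 * t)^2)/2)
          = - of_real x * z^2 + (-((q + of_real t)^2))"
      proof -
        have A1: "\<i> * of_real e * w * of_real (0 + sqrt 2 * t) = 2 * \<i> * of_real e * of_real (sqrt x) * z * of_real t"
          unfolding w_def using as by (simp add: algebra_simps)
        have A2: "complex_of_real (-((0 + sqrt 2 * t)^2)/2) = - ((complex_of_real t)^2)"
          by (simp add: power_mult_distrib)
        have A3: "(q + of_real t)^2 = q^2 + 2 * q * of_real t + (complex_of_real t)^2"
          by (simp add: power2_eq_square algebra_simps)
        have A4: "q^2 = - of_real x * z^2"
          unfolding q_def by (simp add: power_mult_distrib sx ec)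
        have A5: "2 * q * of_real t = - (2 * \<i> * of_real e * of_real (sqrt x) * z * of_real t)"
          unfolding q_def by (simp add: algebra_simps)
        show ?thesis unfolding A1 A2 A3 A4 A5 by (simp add: algebra_simps)
      qed
      show "indicator {0..} (0 + sqrt 2 * t) *\<^sub>R (exp (\<i> * of_real e * w * of_real (0 + sqrt 2 * t)) * of_real (exp (-((0 + sqrt 2 * t)^2)/2)))
         = exp (- of_real x * z^2) * (indicator {0..} t *\<^sub>R exp (-((q + of_real t)^2)))"
        unfolding i using ex
        by (simp add: exp_of_real[symmetric] exp_add[symmetric] del: exp_of_real)
    qed
    finally show ?thesis unfolding H0_def integral_mult_right_zero by (simp add: scaleR_conv_of_real)
  qed
  have Req: "Re q = sqrt x * r"
  proof -
    have "Re q = e * sqrt x * Im z" unfolding q_def by simp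
    also have "\<dots> = sqrt x * r * ((\<sigma> * \<sigma>) * (\<beta> * \<beta>))" unfolding Imz e_def by (simp add: algebra_simps)
    finally show ?thesis using \<sigma>2 \<beta>2 by simp
  qed
  have Rq: "Re q \<ge> 0" unfolding Req using x r by simp
  define f where "f = (\<lambda>t::real. exp (-((q + of_real t)^2)))"
  have fint: "set_integrable lborel {0..} f"
    unfolding set_integrable_def
  proof (rule Bochner_Integration.integrable_bound)
    show "integrable lborel (\<lambda>t. exp ((Im q)^2) * (indicator {0..} t *\<^sub>R exp (- t\<^sup>2)))"
      using gaussian_moment_0 by (intro integrable_mult_right) (auto simp: has_bochner_integral_iff)
    show "(\<lambda>t. indicator {0..} t *\<^sub>R f t) \<in> borel_measurable lborel" unfolding f_def by measurable
    show "AE t in lborel. norm (indicator {0..} t *\<^sub>R f t) \<le> norm (exp ((Im q)^2) * (indicator {0..} t *\<^sub>R exp (- t\<^sup>2)))"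
    proof (rule AE_I2)
      fix t :: real
      show "norm (indicator {0..} t *\<^sub>R f t) \<le> norm (exp ((Im q)^2) * (indicator {0..} t *\<^sub>R exp (- t\<^sup>2)))"
      proof (cases "t \<ge> 0")
        case True
        have "Re (-((q + of_real t)^2)) = (Im q)^2 - (Re q + t)^2"
          by (simp add: power2_eq_square algebra_simps)
        also have "\<dots> \<le> (Im q)^2 - t^2"
          using True Rq by (simp add: power2_eq_square algebra_simps add_nonneg_nonneg mult_nonneg_nonneg)
        finally have "exp (Re (-((q + of_real t)^2))) \<le> exp ((Im q)^2 - t^2)" by simp
        moreover have "exp ((Im q)^2) * exp (- (t^2)) = exp ((Im q)^2 - t^2)"
          by (simp add: exp_diff exp_minus divide_inverse)
        ultimately show ?thesis using True unfolding f_def by (simp add: norm_exp_eq_Re)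
      qed simp
    qed
  qed
  have H: "H0 = integral {0..} f"
    using set_borel_integral_eq_integral(2)[OF fint] unfolding set_lebesgue_integral_def H0_def f_def .
  have E: "exp (- of_real \<beta> * of_real pi / 4 * \<i>) = of_real (sqrt 2 / 2) * (1 - \<i> * of_real \<beta>)"
  proof -
    have "- of_real \<beta> * of_real pi / 4 * \<i> = \<i> * complex_of_real (- \<beta> * pi / 4)" by simp
    then have "exp (- of_real \<beta> * of_real pi / 4 * \<i>) = cis (- \<beta> * pi / 4)" by (simp add: cis_conv_exp mult_ac)
    then show ?thesis using \<beta> by (auto simp: complex_eq_iff cos_45 sin_45)
  qed
  have arg: "exp (- of_real \<beta> * of_real pi / 4 * \<i>) * of_real (sqrt x) * csqrt (of_real (1 - \<beta> * sn)) = q"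
  proof -
    have c1: "csqrt (complex_of_real (1 - \<beta> * sn)) = of_real (sqrt 2) * of_real r"
      using m unfolding m_def[symmetric] r_def by (simp add: csqrt_of_real)
    have c2: "complex_of_real (sqrt 2 / 2) * of_real (sqrt 2) = 1"
      by (simp flip: of_real_mult)
    have S: "complex_of_real \<sigma> * of_real \<sigma> = 1" using \<sigma>2 by (metis of_real_1 of_real_mult)
    have B: "complex_of_real \<beta> * of_real \<beta> = 1" using \<beta>2 by (metis of_real_1 of_real_mult)
    have c3: "q = of_real (sqrt x) * of_real r * (1 - \<i> * of_real \<beta>)"
    proof -
      have "q = (- \<i> * of_real \<beta> * of_real (sqrt x) * of_real r * (1 + \<i> * of_real \<beta>)) * (of_real \<sigma> * of_real \<sigma>)"
        unfolding q_def z_def cs e_def of_real_mult by (simp only: mult_ac)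
      also have "\<dots> = - \<i> * of_real \<beta> * of_real (sqrt x) * of_real r * (1 + \<i> * of_real \<beta>)"
        unfolding S by simp
      also have "\<dots> = of_real (sqrt x) * of_real r * (1 - \<i> * of_real \<beta>)"
        using \<beta> by (auto simp: algebra_simps)
      finally show ?thesis .
    qed
    have "exp (- of_real \<beta> * of_real pi / 4 * \<i>) * of_real (sqrt x) * csqrt (of_real (1 - \<beta> * sn))
        = (complex_of_real (sqrt 2 / 2) * of_real (sqrt 2)) * (of_real (sqrt x) * of_real r * (1 - \<i> * of_real \<beta>))"
      unfolding E c1 by (simp only: mult_ac)
    then show ?thesis unfolding c2 c3 by simp
  qed
  have intg: "integral UNIV (\<lambda>s::real. exp (- of_real (x * s^2))
                 / (of_real s - of_real (sgn (cos \<phi>)) * csqrt (\<i> * of_real \<beta> - \<i> * of_real (sin \<phi>))))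
       = integral UNIV g"
    unfolding g_def z_def \<sigma>_def sn_def ..
  have cer: "cerfc (exp (- of_real \<beta> * of_real pi / 4 * \<i>) * of_real (sqrt x) * csqrt (of_real (1 - \<beta> * sin \<phi>)))
      = of_real (2 / sqrt pi) * H0"
    using arg unfolding sn_def cerfc_def H f_def by simp
  have Ez: "exp (\<i> * of_real (x * \<beta>)) * exp (- of_real x * z^2) = exp (\<i> * of_real (x * sin \<phi>))"
    unfolding z2 sn_def by (simp add: exp_add[symmetric] algebra_simps)
  have be: "\<beta> * e = \<sigma>" unfolding e_def using \<beta>2 by (metis mult.assoc mult.commute mult_1)
  show ?thesis
    unfolding intg unfolding I1 I2 L1 cer \<sigma>_def[symmetric]
    using alg[OF be Ez pi_gt_zero, of \<rho> H0] by (simp only: mult.assoc)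
qed


lemma Pset_cos:
  assumes h5: "\<not> (\<exists>k::int. c = - pi + 2 * pi * \<rho> * of_int k)"
    and h6: "\<not> (\<exists>k::int. c = 2 * pi * \<rho> * of_int k)"
    and "\<phi> \<in> Pset \<rho> c"
  shows "cos \<phi> \<noteq> 0"
proof
  assume c0: "cos \<phi> = 0"
  from assms(3) obtain k :: int where k: "\<phi> = pi/2 + c + 2*pi*\<rho> * of_int k" and b: "-pi \<le> \<phi>" "\<phi> < pi"
    unfolding Pset_def by auto
  from c0 obtain n :: int where n: "\<phi> = of_int n * pi + pi/2" using cos_zero_iff_int2 by auto
  have "(of_int n - 1/2) * pi = \<phi> - pi" using n by (simp add: algebra_simps)
  then have "(of_int n - 1/2) * pi < 0" using b by linarith
  then have "of_int n < (1/2::real)" using pi_gt_zero by (simp add: mult_less_0_iff)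
  then have n1: "n \<le> 0" by linarith
  have "(of_int n + 3/2) * pi = \<phi> + pi" using n by (simp add: algebra_simps)
  then have "0 \<le> (of_int n + 3/2) * pi" using b by linarith
  then have "- (3/2) \<le> (of_int n::real)" using pi_gt_zero by (simp add: zero_le_mult_iff)
  then have n2: "n \<ge> -1" by linarith
  have "n = 0 \<or> n = -1" using n1 n2 by linarith
  then show False
  proof
    assume "n = 0"
    then have "c = 2 * pi * \<rho> * of_int (- k)" using k n by simp
    then show False using h6 by blast
  next
    assume "n = -1"
    then have "c = - pi + 2 * pi * \<rho> * of_int (- k)" using k n by simp
    then show False using h5 by blast
  qed
qed

theorem mainTheorem7:
  fixes \<rho> x \<alpha> \<beta> \<eta> :: real
  assumes "\<rho> > 0" and "x > 0"
    and "\<alpha> \<in> {-1, 1}" and "\<beta> \<in> {-1, 1}"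
    and "\<not> (\<exists>k::int. \<alpha> * \<eta> = - pi + 2 * pi * \<rho> * of_int k)"
    and "\<not> (\<exists>k::int. \<alpha> * \<eta> = 2 * pi * \<rho> * of_int k)"
  shows "(\<Sum>\<phi>\<in>Pset \<rho> (\<alpha> * \<eta>).
            (- (of_real (\<beta> * \<rho>) * exp (\<i> * of_real (x * \<beta>)) / (2 * of_real pi * \<i>)))
            * integral UNIV (\<lambda>s::real. exp (- of_real (x * s^2))
                 / (of_real s - of_real (sgn (cos \<phi>)) * csqrt (\<i> * of_real \<beta> - \<i> * of_real (sin \<phi>)))))
       = - of_real (\<rho> / 2) * (\<Sum>\<phi>\<in>Pset \<rho> (\<alpha> * \<eta>).
            of_real (sgn (cos \<phi>)) * exp (\<i> * of_real (x * sin \<phi>))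
            * cerfc (exp (- of_real \<beta> * of_real pi / 4 * \<i>) * of_real (sqrt x)
                     * csqrt (of_real (1 - \<beta> * sin \<phi>))))"
  unfolding sum_distrib_left
proof (rule sum.cong[OF refl])
  fix \<phi> assume "\<phi> \<in> Pset \<rho> (\<alpha> * \<eta>)"
  then have "cos \<phi> \<noteq> 0" using Pset_cos assms(5,6) by blast
  moreover have "\<beta> = 1 \<or> \<beta> = -1" using assms(4) by auto
  ultimately show "(- (of_real (\<beta> * \<rho>) * exp (\<i> * of_real (x * \<beta>)) / (2 * of_real pi * \<i>)))
            * integral UNIV (\<lambda>s::real. exp (- of_real (x * s^2))
                 / (of_real s - of_real (sgn (cos \<phi>)) * csqrt (\<i> * of_real \<beta> - \<i> * of_real (sin \<phi>))))
       = - of_real (\<rho> / 2) * (of_real (sgn (cos \<phi>)) * exp (\<i> * of_real (x * sin \<phi>))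
            * cerfc (exp (- of_real \<beta> * of_real pi / 4 * \<i>) * of_real (sqrt x)
                     * csqrt (of_real (1 - \<beta> * sin \<phi>))))"
    using term_eq[OF assms(2)] by blast
qed

end
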